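(* Let $h$ be a probability density on $\mathbb{R}^d$ that is $(\alpha,\beta)$-admissible for functions $\alpha,\beta:(0,\infty)\to(0,\infty)$, let $\epsilon>0$ and $k\in(0,2)$, and set $\alpha'=\alpha(k\epsilon)$ and $\beta'=\beta((2-k)\epsilon)$. Let $f:D^n\to\mathbb{R}^d$ and let $S:D^n\to(0,\infty)$ be a $\beta'$-smooth upper bound on the local sensitivity of $f$. Let $Z$ be a random variable with density $h$. Then the randomized algorithm $A(x)=f(x)+\frac{S(x)}{\alpha'}\cdot Z$ is $\epsilon$-differentially private.
   Context: $D^n$ denotes the set of datasets consisting of $n$ elements from a domain $D$. The Hamming distance is $d(x,y)=|\{i:x_i\neq y_i\}|$; $x,y$ are neighboring if $d(x,y)=1$. A randomized mechanism $M$ is $\epsilon$-differentially private if for all neighboring $x,y\in D^n$ and all measurable sets $\mathcal{S}$ of outputs, $\Pr[M(x)\in\mathcal{S}]\le e^{\epsilon}\Pr[M(y)\in\mathcal{S}]$. The local sensitivity of $f:D^n\to\mathbb{R}^d$ at $x$ is $LS_f(x)=\max_{y:d(x,y)=1}\|f(x)-f(y)\|_1$. For $\beta>0$, a function $S:D^n\to\mathbb{R}$ is a $\beta$-smooth upper bound on the local sensitivity of $f$ if $S(x)\ge LS_f(x)$ for all $x\in D^n$ and $S(x)\le e^{\beta}S(y)$ for all $x,y$ with $d(x,y)=1$. Given functions $\alpha,\beta:(0,\infty)\to(0,\infty)$, a probability density $h$ on $\mathbb{R}^d$ is $(\alpha,\beta)$-admissible if for every $\epsilon>0$, every $\Delta\in\mathbb{R}^d$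 with $\|\Delta\|_1\le\alpha(\epsilon)$, every $\lambda\in\mathbb{R}$ with $|\lambda|\le\beta(\epsilon)$, and every measurable $\mathcal{S}\subseteq\mathbb{R}^d$, with $Z\sim h$: (sliding) $\Pr[Z\in\mathcal{S}]\le e^{\epsilon/2}\Pr[Z\in\mathcal{S}+\Delta]$, and (dilation) $\Pr[Z\in\mathcal{S}]\le e^{\epsilon/2}\Pr[Z\in e^{\lambda}\cdot\mathcal{S}]$. *)

theory Defs
  imports "HOL-Probability.Probability"
begin

definition datasets :: "'a set \<Rightarrow> nat \<Rightarrow> 'a list set" where
  "datasets D n = {x. length x = n \<and> set x \<subseteq> D}"

definition hamming :: "'a list \<Rightarrow> 'a list \<Rightarrow> nat" where
  "hamming x y = card {i. i < length x \<and> x ! i \<noteq> y ! i}"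

definition neighboring :: "'a set \<Rightarrow> nat \<Rightarrow> 'a list \<Rightarrow> 'a list \<Rightarrow> bool" where
  "neighboring D n x y \<longleftrightarrow> x \<in> datasets D n \<and> y \<in> datasets D n \<and> hamming x y = 1"

definition l1norm :: "real ^ 'd \<Rightarrow> real" where
  "l1norm v = (\<Sum>i\<in>UNIV. \<bar>v $ i\<bar>)"

text \<open>Local sensitivity (extended-real valued, so that it is meaningful even when unbounded).\<close>
definition local_sensitivity ::
  "'a set \<Rightarrow> nat \<Rightarrow> ('a list \<Rightarrow> real ^ 'd) \<Rightarrow> 'a list \<Rightarrow> ereal" where
  "local_sensitivity D n f x =
     (SUP y\<in>{y. neighboring D n x y}. ereal (l1norm (f x - f y)))"

definition smooth_upper_bound ::
  "'a set \<Rightarrow> nat \<Rightarrow> ('a list \<Rightarrow> real ^ 'd) \<Rightarrow> real \<Rightarrow> ('a list \<Rightarrow> real) \<Rightarrow> bool" where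
  "smooth_upper_bound D n f \<beta> S \<longleftrightarrow>
     (\<forall>x\<in>datasets D n. local_sensitivity D n f x \<le> ereal (S x)) \<and>
     (\<forall>x y. neighboring D n x y \<longrightarrow> S x \<le> exp \<beta> * S y)"

definition dens_prob :: "(real ^ 'd \<Rightarrow> real) \<Rightarrow> (real ^ 'd) set \<Rightarrow> real" where
  "dens_prob h A = measure (density lborel (\<lambda>z. ennreal (h z))) A"

definition admissible ::
  "(real \<Rightarrow> real) \<Rightarrow> (real \<Rightarrow> real) \<Rightarrow> (real ^ 'd \<Rightarrow> real) \<Rightarrow> bool" where
  "admissible \<alpha> \<beta> h \<longleftrightarrow>
     (\<forall>\<epsilon>>0. \<forall>\<Delta>. \<forall>l::real. \<forall>A\<in>sets borel.
        (l1norm \<Delta> \<le> \<alpha> \<epsilon> \<longrightarrow> dens_prob h A \<le> exp (\<epsilon>/2) * dens_prob h ((\<lambda>s. s + \<Delta>) ` A)) \<and>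
        (\<bar>l\<bar> \<le> \<beta> \<epsilon> \<longrightarrow> dens_prob h A \<le> exp (\<epsilon>/2) * dens_prob h ((\<lambda>s. exp l *\<^sub>R s) ` A)))"

definition differentially_private ::
  "'a set \<Rightarrow> nat \<Rightarrow> real \<Rightarrow> ('a list \<Rightarrow> 'b measure) \<Rightarrow> bool" where
  "differentially_private D n \<epsilon> M \<longleftrightarrow>
     (\<forall>x y. neighboring D n x y \<longrightarrow>
        (\<forall>T\<in>sets (M x). measure (M x) T \<le> exp \<epsilon> * measure (M y) T))"

end

theory Submission
  imports Defs
begin

lemma key:
  fixes Z :: "'w \<Rightarrow> real ^ 'd"
  assumes Z: "distributed M lborel Z (\<lambda>z. ennreal (h z))" and T: "T \<in> sets borel"
  shows "measure (distr M borel (\<lambda>\<omega>. v + c *\<^sub>R Z \<omega>)) T = dens_prob h {z. v + c *\<^sub>R z \<in> T}"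
proof -
  have Zm: "Z \<in> borel_measurable M" using distributed_measurable[OF Z] by simp
  have gm: "(\<lambda>\<omega>. v + c *\<^sub>R Z \<omega>) \<in> borel_measurable M" using Zm by measurable
  have Am: "{z. v + c *\<^sub>R z \<in> T} \<in> sets borel"
  proof -
    have "(\<lambda>z::real^'d. v + c *\<^sub>R z) \<in> borel_measurable borel" by measurable
    hence "(\<lambda>z::real^'d. v + c *\<^sub>R z) -` T \<inter> space borel \<in> sets borel" using T by (rule measurable_sets)
    thus ?thesis by (simp add: vimage_def)
  qed
  have "measure (distr M borel (\<lambda>\<omega>. v + c *\<^sub>R Z \<omega>)) T = measure M ((\<lambda>\<omega>. v + c *\<^sub>R Z \<omega>) -` T \<inter> space M)"
    using gm T by (simp add: measure_distr)
  also have "\<dots> = measure M (Z -` {z. v + c *\<^sub>R z \<in> T} \<inter> space M)" by (simp add: vimage_def)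
  also have "\<dots> = measure (distr M lborel Z) {z. v + c *\<^sub>R z \<in> T}"
    using Zm Am by (simp add: measure_distr)
  also have "\<dots> = dens_prob h {z. v + c *\<^sub>R z \<in> T}"
    unfolding dens_prob_def using distributed_distr_eq_density[OF Z] by simp
  finally show ?thesis .
qed

lemma l1norm_scale: "l1norm (c *\<^sub>R v) = \<bar>c\<bar> * l1norm v"
  unfolding l1norm_def by (simp add: sum_distrib_left abs_mult)

lemma hamming_sym: "length x = length y \<Longrightarrow> hamming x y = hamming y x"
  unfolding hamming_def by (metis)

lemma neighboring_sym: "neighboring D n x y \<Longrightarrow> neighboring D n y x"
  unfolding neighboring_def datasets_def hamming_def by (auto simp: eq_commute)


theorem theorem1:
  fixes h :: "real ^ 'd \<Rightarrow> real"
    and \<alpha> \<beta> :: "real \<Rightarrow> real"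
    and \<epsilon> k :: real
    and D :: "'a set" and n :: nat
    and f :: "'a list \<Rightarrow> real ^ 'd"
    and S :: "'a list \<Rightarrow> real"
    and M :: "'w measure" and Z :: "'w \<Rightarrow> real ^ 'd"
  assumes h_meas: "h \<in> borel_measurable lborel"
    and h_nonneg: "\<forall>z. 0 \<le> h z"
    and h_int: "(\<integral>\<^sup>+ z. ennreal (h z) \<partial>lborel) = 1"
    and \<alpha>_pos: "\<forall>e>0. \<alpha> e > 0"
    and \<beta>_pos: "\<forall>e>0. \<beta> e > 0"
    and adm: "admissible \<alpha> \<beta> h"
    and eps: "\<epsilon> > 0"
    and k: "0 < k" "k < 2"
    and S_pos: "\<forall>x\<in>datasets D n. S x > 0"
    and S_smooth: "smooth_upper_bound D n f (\<beta> ((2 - k) * \<epsilon>)) S"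
    and M: "prob_space M"
    and Z: "distributed M lborel Z (\<lambda>z. ennreal (h z))"
  shows "differentially_private D n \<epsilon>
           (\<lambda>x. distr M borel (\<lambda>\<omega>. f x + (S x / \<alpha> (k * \<epsilon>)) *\<^sub>R Z \<omega>))"
  proof -
  define a where "a = \<alpha> (k * \<epsilon>)"
  define b where "b = \<beta> ((2 - k) * \<epsilon>)"
  have a_pos: "a > 0" using \<alpha>_pos eps k unfolding a_def by simp
  have keps: "k * \<epsilon> > 0" "(2 - k) * \<epsilon> > 0" using eps k by auto
  show ?thesis unfolding differentially_private_def
  proof (intro allI impI ballI)
    fix x y T assume nb: "neighboring D n x y"
      and T0: "T \<in> sets (distr M borel (\<lambda>\<omega>. f x + (S x / \<alpha> (k * \<epsilon>)) *\<^sub>R Z \<omega>))"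
    have T: "T \<in> sets borel" using T0 by simp
    have nb': "neighboring D n y x" using nb by (rule neighboring_sym)
    have xd: "x \<in> datasets D n" and yd: "y \<in> datasets D n" using nb unfolding neighboring_def by auto
    have Sx: "S x > 0" and Sy: "S y > 0" using S_pos xd yd by auto
    define sx where "sx = S x / a"
    define sy where "sy = S y / a"
    have sx: "sx > 0" and sy: "sy > 0" using Sx Sy a_pos unfolding sx_def sy_def by auto
    define A where "A = {z. f x + sx *\<^sub>R z \<in> T}"
    define \<Delta> where "\<Delta> = (1 / sx) *\<^sub>R (f x - f y)"
    have LS: "local_sensitivity D n f x \<le> ereal (S x)"
      using S_smooth xd unfolding smooth_upper_bound_def b_def by auto
    have "ereal (l1norm (f x - f y)) \<le> local_sensitivity D n f x"
      unfolding local_sensitivity_def using nb by (auto intro: SUP_upper)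
    with LS have fxy: "l1norm (f x - f y) \<le> S x" using order_trans ereal_less_eq(3) by metis
    have "l1norm \<Delta> = (1 / sx) * l1norm (f x - f y)" unfolding \<Delta>_def using sx by (simp add: l1norm_scale)
    also have "\<dots> \<le> (1 / sx) * S x" using fxy sx by (simp add: divide_right_mono)
    also have "\<dots> = a" unfolding sx_def using Sx a_pos by simp
    finally have Dl: "l1norm \<Delta> \<le> \<alpha> (k * \<epsilon>)" unfolding a_def .
    have Am: "A \<in> sets borel"
    proof -
      have "(\<lambda>z::real^'d. f x + sx *\<^sub>R z) \<in> borel_measurable borel" by measurable
      hence "(\<lambda>z::real^'d. f x + sx *\<^sub>R z) -` T \<inter> space borel \<in> sets borel" using T by (rule measurable_sets)
      thus ?thesis by (simp add: vimage_def A_def)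
    qed
    define B where "B = (\<lambda>s. s + \<Delta>) ` A"
    have B_eq: "B = {z. f x + sx *\<^sub>R (z - \<Delta>) \<in> T}"
      unfolding B_def A_def by (auto simp: image_iff intro!: exI[of _ "_ - \<Delta>"])
    have Bm: "B \<in> sets borel"
    proof -
      have "(\<lambda>z::real^'d. f x + sx *\<^sub>R (z - \<Delta>)) \<in> borel_measurable borel" by measurable
      hence "(\<lambda>z::real^'d. f x + sx *\<^sub>R (z - \<Delta>)) -` T \<inter> space borel \<in> sets borel" using T by (rule measurable_sets)
      thus ?thesis by (simp add: vimage_def B_eq)
    qed
    define l where "l = ln (S x / S y)"
    have b1: "S x \<le> exp b * S y" using S_smooth nb unfolding smooth_upper_bound_def b_def by auto
    have b2: "S y \<le> exp b * S x" using S_smooth nb' unfolding smooth_upper_bound_def b_def by auto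
    have "l \<le> b"
    proof -
      have "S x / S y \<le> exp b" using b1 Sy by (simp add: divide_le_eq)
      thus ?thesis unfolding l_def using Sx Sy by (metis ln_exp ln_le_cancel_iff exp_gt_zero divide_pos_pos)
    qed
    moreover have "- b \<le> l"
    proof -
      have "exp (-b) \<le> S x / S y" using b2 Sy Sx by (simp add: exp_minus field_simps mult.commute)
      thus ?thesis unfolding l_def using Sx Sy by (metis ln_exp ln_le_cancel_iff exp_gt_zero divide_pos_pos)
    qed
    ultimately have ll: "\<bar>l\<bar> \<le> \<beta> ((2 - k) * \<epsilon>)" unfolding b_def by auto
    have el: "exp l = sx / sy" unfolding l_def sx_def sy_def using Sx Sy a_pos by simp
    have C_eq: "(\<lambda>s. exp l *\<^sub>R s) ` B = {z. f y + sy *\<^sub>R z \<in> T}"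
    proof -
      have "\<And>z. (f y + sy *\<^sub>R z) = f x + sx *\<^sub>R ((sy / sx) *\<^sub>R z - \<Delta>)"
        unfolding \<Delta>_def using sx sy by (simp add: algebra_simps)
      moreover have "\<And>w. f x + sx *\<^sub>R (w - \<Delta>) = f y + sy *\<^sub>R ((sx / sy) *\<^sub>R w)"
        unfolding \<Delta>_def using sx sy by (simp add: algebra_simps)
      ultimately show ?thesis unfolding B_eq el using sx sy
        by (auto simp: image_iff intro!: exI[of _ "(sy / sx) *\<^sub>R _"])
    qed
    have s1: "dens_prob h A \<le> exp (k * \<epsilon> / 2) * dens_prob h B"
      using adm keps Dl Am unfolding admissible_def B_def by blast
    have s2: "dens_prob h B \<le> exp ((2 - k) * \<epsilon> / 2) * dens_prob h ((\<lambda>s. exp l *\<^sub>R s) ` B)"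
      using adm keps ll Bm unfolding admissible_def by blast
    have "measure (distr M borel (\<lambda>\<omega>. f x + (S x / a) *\<^sub>R Z \<omega>)) T = dens_prob h A"
      unfolding A_def sx_def by (rule key[OF Z T])
    also have "\<dots> \<le> exp (k * \<epsilon> / 2) * (exp ((2 - k) * \<epsilon> / 2) * dens_prob h ((\<lambda>s. exp l *\<^sub>R s) ` B))"
      using s1 s2 by (meson exp_gt_zero less_eq_real_def mult_left_mono order_trans)
    also have "\<dots> = exp \<epsilon> * dens_prob h {z. f y + sy *\<^sub>R z \<in> T}"
    proof -
      have "k * \<epsilon> / 2 + (2 - k) * \<epsilon> / 2 = \<epsilon>" by (simp add: field_simps)
      hence "exp (k * \<epsilon> / 2) * exp ((2 - k) * \<epsilon> / 2) = exp \<epsilon>" by (metis exp_add)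
      thus ?thesis unfolding C_eq by (simp add: mult.assoc[symmetric])
    qed
    also have "dens_prob h {z. f y + sy *\<^sub>R z \<in> T} = measure (distr M borel (\<lambda>\<omega>. f y + (S y / a) *\<^sub>R Z \<omega>)) T"
      unfolding sy_def by (rule key[OF Z T, symmetric])
    finally show "measure (distr M borel (\<lambda>\<omega>. f x + (S x / \<alpha> (k * \<epsilon>)) *\<^sub>R Z \<omega>)) T
        \<le> exp \<epsilon> * measure (distr M borel (\<lambda>\<omega>. f y + (S y / \<alpha> (k * \<epsilon>)) *\<^sub>R Z \<omega>)) T"
      by (simp only: a_def)
  qed
qed


end
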